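(* Let $\underline{x}<\bar x$, $\underline{b}\le\bar b$, and $C$ with $\underline{b}(\bar x-\underline{x})\le C\le\bar b(\bar x-\underline{x})$, and let $g:(\underline{x},\bar x]\to(-\infty,\infty]$ be measurable. Consider the problem of maximizing $\int_{\underline{x}}^{\bar x}(h(x)-g(x))_+\,dx$ over functions $h$ on $(\underline{x},\bar x]$ such that $\int_{\underline{x}}^{\bar x}h(x)\,dx=C$, $\underline{b}\le h(x)\le\bar b$ for $x\in(\underline{x},\bar x]$, and $h$ is non-increasing and left-continuous. Then an optimal solution $h^\star$ exists and has the form $h^\star(x)=y_1^\star$ for $\underline{x}<x\le x_1^\star$, $h^\star(x)=y_2^\star$ for $x_1^\star<x\le x_2^\star$, $h^\star(x)=y_3^\star$ for $x_2^\star<x\le\bar x$, for some $\underline{b}\le y_3^\star\le y_2^\star\le y_1^\star\le\bar b$ and $\underline{x}\le x_1^\star\le x_2^\star\le\bar x$.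
   Context: $(t)_+=\max(t,0)$. *)

theory Defs
  imports "HOL-Analysis.Analysis"
begin

definition feasible7 :: "real \<Rightarrow> real \<Rightarrow> real \<Rightarrow> real \<Rightarrow> real \<Rightarrow> (real \<Rightarrow> real) \<Rightarrow> bool" where
  "feasible7 xl xu bl bu C h \<longleftrightarrow>
     (h has_integral C) {xl<..xu} \<and>
     (\<forall>x\<in>{xl<..xu}. bl \<le> h x \<and> h x \<le> bu) \<and>
     (\<forall>x y. xl < x \<and> x \<le> y \<and> y \<le> xu \<longrightarrow> h y \<le> h x) \<and>
     (\<forall>x\<in>{xl<..xu}. continuous (at_left x) h)"

definition objective7 :: "real \<Rightarrow> real \<Rightarrow> (real \<Rightarrow> ereal) \<Rightarrow> (real \<Rightarrow> real) \<Rightarrow> ennreal" where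
  "objective7 xl xu g h =
     (\<integral>\<^sup>+ x. e2ennreal (max 0 (ereal (h x) - g x)) * indicator {xl<..xu} x \<partial>lebesgue)"

end

theory Submission
  imports Defs "HOL-Analysis.Analysis"
begin


definition Psi :: "(real \<Rightarrow> ereal) \<Rightarrow> real \<Rightarrow> real \<Rightarrow> ennreal" where
  "Psi g x r = e2ennreal (max 0 (ereal r - g x))"

lemma Psi_inf: "g x = \<infinity> \<Longrightarrow> Psi g x r = 0"
  by (simp add: Psi_def zero_ennreal.abs_eq[symmetric])

lemma Psi_fin: "g x \<noteq> -\<infinity> \<Longrightarrow> g x \<noteq> \<infinity> \<Longrightarrow> Psi g x r = ennreal (r - real_of_ereal (g x))"
proof -
  assume a: "g x \<noteq> -\<infinity>" "g x \<noteq> \<infinity>"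
  then obtain G where G: "g x = ereal G" by (cases "g x") auto
  have eq: "max 0 (ereal r - g x) = ereal (max 0 (r - G))" using G by (auto simp: max_def)
  show ?thesis unfolding Psi_def eq e2ennreal_ereal ennreal_max_0 using G by simp  
qed

lemma Psi_mono: assumes "r \<le> s" shows "Psi g x r \<le> Psi g x s"
proof -
  have "ereal r - g x \<le> ereal s - g x" using assms by (intro ereal_minus_mono) auto
  then have "max 0 (ereal r - g x) \<le> max 0 (ereal s - g x)" by (rule max.mono[OF order_refl])
  then show ?thesis unfolding Psi_def by (rule e2ennreal_mono)
qed

lemma Psi_lip: assumes "g x \<noteq> -\<infinity>" "0 \<le> e" shows "Psi g x (r + e) \<le> Psi g x r + ennreal e"
proof (cases "g x = \<infinity>")
  case True then show ?thesis by (simp add: Psi_inf)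
next
  case False
  define G where "G = real_of_ereal (g x)"
  have "ennreal (r + e - G) \<le> ennreal (max 0 (r - G) + e)" by (intro ennreal_leI) auto
  also have "\<dots> = ennreal (max 0 (r - G)) + ennreal e" using assms by (intro ennreal_plus) auto
  finally show ?thesis unfolding Psi_fin[of g x, OF assms(1) False] G_def[symmetric] ennreal_max_0 .
qed

lemma Psi_convex: assumes "g x \<noteq> -\<infinity>" "0 \<le> l" "l \<le> 1"
  shows "Psi g x (l * a + (1 - l) * b) \<le> ennreal l * Psi g x a + ennreal (1 - l) * Psi g x b"
proof (cases "g x = \<infinity>")
  case True then show ?thesis by (simp add: Psi_inf)
next
  case False
  define G where "G = real_of_ereal (g x)"
  have "l * a + (1 - l) * b - G = l * (a - G) + (1 - l) * (b - G)" by (simp add: algebra_simps)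
  also have "\<dots> \<le> l * max 0 (a - G) + (1 - l) * max 0 (b - G)"
    using assms by (intro add_mono mult_left_mono) auto
  finally have "ennreal (l * a + (1 - l) * b - G) \<le> ennreal (l * max 0 (a - G) + (1 - l) * max 0 (b - G))"
    by (intro ennreal_leI)
  also have "\<dots> = ennreal (l * max 0 (a - G)) + ennreal ((1 - l) * max 0 (b - G))"
    using assms by (intro ennreal_plus) auto
  also have "\<dots> = ennreal l * ennreal (max 0 (a - G)) + ennreal (1 - l) * ennreal (max 0 (b - G))"
    using assms by (simp add: ennreal_mult)
  finally show ?thesis unfolding Psi_fin[of g x, OF assms(1) False] G_def[symmetric] ennreal_max_0 .
qed

lemma Psi_meas:
  assumes g: "g \<in> borel_measurable (restrict_space lebesgue {xl<..xu::real})"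
    and k: "k \<in> borel_measurable borel"
  shows "(\<lambda>x. Psi g x (k x) * indicator {xl<..xu} x) \<in> borel_measurable lebesgue"
proof -
  have k': "k \<in> borel_measurable (restrict_space lebesgue {xl<..xu})"
    by (rule measurable_restrict_space1, rule measurable_completion, use k in simp)
  have "(\<lambda>x. Psi g x (k x)) \<in> borel_measurable (restrict_space lebesgue {xl<..xu})"
    unfolding Psi_def using g k' by measurable
  then show ?thesis
    by (subst (asm) borel_measurable_restrict_space_iff_ennreal) auto
qed


definition Phi :: "real \<Rightarrow> real \<Rightarrow> (real \<Rightarrow> ereal) \<Rightarrow> (real \<Rightarrow> real) \<Rightarrow> ennreal" where
  "Phi xl xu g h = (\<integral>\<^sup>+ x. Psi g x (h x) * indicator {xl<..xu} x \<partial>lebesgue)"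

lemma nn_integral_step_has_integral:
  fixes e :: "real \<Rightarrow> real"
  assumes e: "e \<in> borel_measurable borel" and I: "(e has_integral I) S" and nn: "\<And>x. x \<in> S \<Longrightarrow> 0 \<le> e x"
  shows "(\<integral>\<^sup>+ x. ennreal (e x) * indicator S x \<partial>lebesgue) = ennreal I"
proof -
  have "(\<integral>\<^sup>+ x. ennreal (e x) * indicator S x \<partial>lebesgue) = (\<integral>\<^sup>+ x. ennreal (indicator S x * e x) \<partial>lebesgue)"
    by (intro nn_integral_cong) (auto simp: indicator_def)
  also have "\<dots> = (\<integral>\<^sup>+ x. ennreal (indicator S x * e x) \<partial>lborel)"
    by (simp add: nn_integral_completion)
  also have "\<dots> = ennreal I" using nn_integral_has_integral_lebesgue[OF nn I] by simp
  finally show ?thesis .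
qed

lemma Phi_lip:
  assumes g: "g \<in> borel_measurable (restrict_space lebesgue {xl<..xu::real})"
    and gfin: "\<forall>x\<in>{xl<..xu}. g x \<noteq> -\<infinity>"
    and k: "k \<in> borel_measurable borel" and e: "e \<in> borel_measurable borel"
    and I: "(e has_integral I) {xl<..xu}" and nn: "\<forall>x\<in>{xl<..xu}. 0 \<le> e x"
    and le: "\<forall>x\<in>{xl<..xu}. h x \<le> k x + e x"
  shows "Phi xl xu g h \<le> Phi xl xu g k + ennreal I"
proof -
  have "Phi xl xu g h \<le> (\<integral>\<^sup>+ x. Psi g x (k x) * indicator {xl<..xu} x + ennreal (e x) * indicator {xl<..xu} x \<partial>lebesgue)"
    unfolding Phi_def
  proof (intro nn_integral_mono)
    fix x
    show "Psi g x (h x) * indicator {xl<..xu} x \<le> Psi g x (k x) * indicator {xl<..xu} x + ennreal (e x) * indicator {xl<..xu} x"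
    proof (cases "x \<in> {xl<..xu}")
      case True
      have "Psi g x (h x) \<le> Psi g x (k x + e x)" using le True by (intro Psi_mono) auto
      also have "\<dots> \<le> Psi g x (k x) + ennreal (e x)" using gfin nn True by (intro Psi_lip) auto
      finally show ?thesis using True by simp
    qed simp
  qed
  also have "\<dots> = Phi xl xu g k + (\<integral>\<^sup>+ x. ennreal (e x) * indicator {xl<..xu} x \<partial>lebesgue)"
    unfolding Phi_def
    by (rule nn_integral_add) (use Psi_meas[OF g k] e in \<open>auto intro!: measurable_completion\<close>)
  also have "(\<integral>\<^sup>+ x. ennreal (e x) * indicator {xl<..xu} x \<partial>lebesgue) = ennreal I"
    using nn by (intro nn_integral_step_has_integral[OF e I]) auto
  finally show ?thesis .
qed

lemma Phi_convex:
  assumes g: "g \<in> borel_measurable (restrict_space lebesgue {xl<..xu::real})"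
    and gfin: "\<forall>x\<in>{xl<..xu}. g x \<noteq> -\<infinity>"
    and a: "a \<in> borel_measurable borel" and b: "b \<in> borel_measurable borel"
    and l: "0 \<le> l" "l \<le> 1"
    and eq: "\<forall>x\<in>{xl<..xu}. h x = l * a x + (1 - l) * b x"
  shows "Phi xl xu g h \<le> max (Phi xl xu g a) (Phi xl xu g b)"
proof -
  have "Phi xl xu g h \<le> (\<integral>\<^sup>+ x. ennreal l * (Psi g x (a x) * indicator {xl<..xu} x) + ennreal (1 - l) * (Psi g x (b x) * indicator {xl<..xu} x) \<partial>lebesgue)"
    unfolding Phi_def
  proof (intro nn_integral_mono)
    fix x
    show "Psi g x (h x) * indicator {xl<..xu} x \<le> ennreal l * (Psi g x (a x) * indicator {xl<..xu} x) + ennreal (1 - l) * (Psi g x (b x) * indicator {xl<..xu} x)"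
    proof (cases "x \<in> {xl<..xu}")
      case True
      have "Psi g x (h x) \<le> ennreal l * Psi g x (a x) + ennreal (1 - l) * Psi g x (b x)"
        using eq True gfin l by (auto intro!: Psi_convex)
      then show ?thesis using True by simp
    qed simp
  qed
  also have "\<dots> = ennreal l * Phi xl xu g a + ennreal (1 - l) * Phi xl xu g b"
    unfolding Phi_def using Psi_meas[OF g a] Psi_meas[OF g b]
    by (simp add: nn_integral_add nn_integral_cmult)
  also have "\<dots> \<le> ennreal l * max (Phi xl xu g a) (Phi xl xu g b) + ennreal (1 - l) * max (Phi xl xu g a) (Phi xl xu g b)"
    by (intro add_mono mult_left_mono) auto
  also have "\<dots> = (ennreal l + ennreal (1 - l)) * max (Phi xl xu g a) (Phi xl xu g b)"
    by (simp add: distrib_right)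
  also have "ennreal l + ennreal (1 - l) = 1" using l by (simp add: ennreal_plus[symmetric])
  finally show ?thesis by simp
qed


definition stp :: "real \<Rightarrow> (real \<times> real) list \<Rightarrow> real \<Rightarrow> real" where
  "stp y0 ps x = y0 + sum_list (map (\<lambda>(d,q). if x \<le> q then d else 0) ps)"

definition sumd :: "(real \<times> real) list \<Rightarrow> real" where
  "sumd ps = sum_list (map fst ps)"

definition Jf :: "real \<Rightarrow> (real \<times> real) list \<Rightarrow> real" where
  "Jf xl ps = sum_list (map (\<lambda>(d,q). d * (q - xl)) ps)"

definition inv3 :: "real \<Rightarrow> real \<Rightarrow> (real \<times> real) list \<Rightarrow> bool" where
  "inv3 xl xu ps \<longleftrightarrow> (\<forall>(d,q)\<in>set ps. 0 \<le> d \<and> xl \<le> q \<and> q \<le> xu)"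

lemma stp_Nil[simp]: "stp y0 [] x = y0" by (simp add: stp_def)
lemma stp_Cons[simp]: "stp y0 ((d,q)#ps) x = stp y0 ps x + (if x \<le> q then d else 0)"
  by (simp add: stp_def)
lemma sumd_simps[simp]: "sumd [] = 0" "sumd ((d,q)#ps) = d + sumd ps" by (simp_all add: sumd_def)
lemma Jf_simps[simp]: "Jf xl [] = 0" "Jf xl ((d,q)#ps) = d * (q - xl) + Jf xl ps" by (simp_all add: Jf_def)
lemma inv3_simps[simp]: "inv3 xl xu []" "inv3 xl xu ((d,q)#ps) \<longleftrightarrow> 0 \<le> d \<and> xl \<le> q \<and> q \<le> xu \<and> inv3 xl xu ps"
  by (auto simp: inv3_def)

lemma stp_meas: "stp y0 ps \<in> borel_measurable borel"
proof (induction ps)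
  case Nil then show ?case by (simp add: stp_def)
next
  case (Cons p ps)
  obtain d q where p: "p = (d,q)" by force
  have "(\<lambda>x. if x \<le> q then d else (0::real)) \<in> borel_measurable borel" by measurable
  with Cons show ?case unfolding p stp_Cons by (intro borel_measurable_add) auto
qed

lemma has_integral_Ioc_of_Icc:
  fixes f :: "real \<Rightarrow> real"
  assumes "(f has_integral I) {a..b}" shows "(f has_integral I) {a<..b}"
proof -
  have "(f has_integral I) {a..b} \<longleftrightarrow> (f has_integral I) {a<..b}"
    by (rule has_integral_spike_set_eq; rule negligible_subset[of "{a}"]) auto
  with assms show ?thesis by simp
qed

lemma has_integral_const_Ioc:
  fixes a b c :: real assumes "a \<le> b"
  shows "((\<lambda>x. c) has_integral c * (b - a)) {a<..b}"
  using has_integral_Ioc_of_Icc[OF has_integral_const_real[of c a b]] assms by (simp add: mult.commute)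

lemma has_integral_ind_Ioc:
  fixes xl xu q d :: real assumes "xl \<le> q" "q \<le> xu"
  shows "((\<lambda>x. if x \<le> q then d else 0) has_integral d * (q - xl)) {xl<..xu}"
proof -
  have "((\<lambda>x. if x \<in> {xl<..q} then d else 0) has_integral d * (q - xl)) {xl<..xu}"
    using assms by (subst has_integral_restrict) (auto intro: has_integral_const_Ioc)
  moreover have "((\<lambda>x. if x \<le> q then d else 0) has_integral d * (q - xl)) {xl<..xu} \<longleftrightarrow>
    ((\<lambda>x. if x \<in> {xl<..q} then d else 0) has_integral d * (q - xl)) {xl<..xu}"
    by (rule has_integral_cong) auto
  ultimately show ?thesis by simp
qed

lemma stp_int:
  assumes "xl \<le> xu" "inv3 xl xu ps"
  shows "(stp y0 ps has_integral (y0 * (xu - xl) + Jf xl ps)) {xl<..xu}"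
  using assms(2)
proof (induction ps)
  case Nil then show ?case using has_integral_const_Ioc[OF assms(1)] by (simp add: stp_def)
next
  case (Cons p ps)
  obtain d q where p: "p = (d,q)" by force
  have "((\<lambda>x. stp y0 ps x + (if x \<le> q then d else 0)) has_integral
          (y0 * (xu - xl) + Jf xl ps) + d * (q - xl)) {xl<..xu}"
    using Cons p by (intro has_integral_add has_integral_ind_Ioc) auto
  then show ?case unfolding p by (simp add: algebra_simps)
qed

lemma stp_antimono:
  assumes "inv3 xl xu ps" "x \<le> y" shows "stp y0 ps y \<le> stp y0 ps x"
  using assms by (induction ps) (auto intro: add_mono)

lemma stp_bounds:
  assumes "inv3 xl xu ps" shows "y0 \<le> stp y0 ps x" "stp y0 ps x \<le> y0 + sumd ps"
  using assms by (induction ps) (auto intro: add_mono)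

lemma filter_nz:
  "stp y0 (filter (\<lambda>(d,q). d \<noteq> 0) ps) x = stp y0 ps x"
  "sumd (filter (\<lambda>(d,q). d \<noteq> 0) ps) = sumd ps"
  "Jf xl (filter (\<lambda>(d,q). d \<noteq> 0) ps) = Jf xl ps"
  "inv3 xl xu ps \<Longrightarrow> inv3 xl xu (filter (\<lambda>(d,q). d \<noteq> 0) ps)"
  by (induction ps) auto

lemma stp_left_cont: "continuous (at_left x) (stp y0 ps)"
proof (induction ps)
  case Nil then show ?case by (simp add: stp_def)
next
  case (Cons p ps)
  obtain d q where p: "p = (d,q)" by force
  have "continuous (at_left x) (\<lambda>y. if y \<le> q then d else (0::real))"
  proof (cases "q < x")
    case True
    have "eventually (\<lambda>y. (if y \<le> q then d else (0::real)) = (if x \<le> q then d else 0)) (at_left x)"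
      using True by (intro eventually_mono[OF eventually_at_left_real[of q x]]) auto
    then show ?thesis unfolding continuous_within by (rule tendsto_eventually)
  next
    case False
    have "eventually (\<lambda>y. (if y \<le> q then d else (0::real)) = (if x \<le> q then d else 0)) (at_left x)"
      using False by (intro eventually_mono[OF eventually_at_left_real[of "x - 1" x]]) auto
    then show ?thesis unfolding continuous_within by (rule tendsto_eventually)
  qed
  with Cons show ?case unfolding p stp_Cons by (intro continuous_add) auto
qed


lemma exists_zero_pos:
  fixes da db dc ea eb ec :: real
  assumes "0 < da" "0 < db" "0 < dc" "ea + eb + ec = 0" "ec \<noteq> 0"
  shows "\<exists>t>0. min (da + t*ea) (min (db + t*eb) (dc + t*ec)) = 0"
proof -
  define m where "m t = min (da + t*ea) (min (db + t*eb) (dc + t*ec))" for t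
  have "\<exists>T>0. m T \<le> 0"
  proof -
    have "ea < 0 \<or> eb < 0 \<or> ec < 0" using assms(4,5) by linarith
    then show ?thesis
    proof (elim disjE)
      assume "ea < 0" then show ?thesis using assms
        by (intro exI[of _ "da / (- ea)"]) (auto simp: m_def field_simps)
    next
      assume "eb < 0" then show ?thesis using assms
        by (intro exI[of _ "db / (- eb)"]) (auto simp: m_def field_simps)
    next
      assume "ec < 0" then show ?thesis using assms
        by (intro exI[of _ "dc / (- ec)"]) (auto simp: m_def field_simps)
    qed
  qed
  then obtain T where T: "T > 0" "m T \<le> 0" by blast
  have "continuous_on {0..T} m" unfolding m_def by (intro continuous_intros)
  moreover have "m 0 > 0" using assms by (simp add: m_def)
  ultimately obtain t where t: "0 \<le> t" "t \<le> T" "m t = 0"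
    using IVT2'[of m T 0 0] T by force
  with \<open>m 0 > 0\<close> have "t > 0" by (cases "t = 0") auto
  with t show ?thesis unfolding m_def by blast
qed

lemma reduce:
  assumes g: "g \<in> borel_measurable (restrict_space lebesgue {xl<..xu::real})"
    and gfin: "\<forall>x\<in>{xl<..xu}. g x \<noteq> -\<infinity>"
  shows "inv3 xl xu ps \<Longrightarrow> \<exists>ps'. length ps' \<le> 2 \<and> inv3 xl xu ps' \<and> sumd ps' = sumd ps \<and>
     Jf xl ps' = Jf xl ps \<and> Phi xl xu g (stp y0 ps) \<le> Phi xl xu g (stp y0 ps')"
proof (induction ps rule: length_induct)
  case (1 ps)
  have IH: "\<And>ys. length ys < length ps \<Longrightarrow> inv3 xl xu ys \<Longrightarrow> \<exists>ps'. length ps' \<le> 2 \<and> inv3 xl xu ps' \<and> sumd ps' = sumd ys \<and>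
     Jf xl ps' = Jf xl ys \<and> Phi xl xu g (stp y0 ys) \<le> Phi xl xu g (stp y0 ps')"
    using 1(1) by blast
  have inv: "inv3 xl xu ps" by fact
  have filt: "\<exists>ps'. length ps' \<le> 2 \<and> inv3 xl xu ps' \<and> sumd ps' = sumd ys \<and>
     Jf xl ps' = Jf xl ys \<and> Phi xl xu g (stp y0 ys) \<le> Phi xl xu g (stp y0 ps')"
    if ys: "length ys = length ps" "inv3 xl xu ys" "\<exists>p\<in>set ys. fst p = 0" for ys
  proof -
    let ?ys = "filter (\<lambda>(d,q). d \<noteq> 0) ys"
    from ys(3) obtain p where p: "p \<in> set ys" "fst p = 0" by blast
    have "length ?ys < length ps" using p ys(1)
      by (subst ys(1)[symmetric], intro length_filter_less) (auto split: prod.splits)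
    from IH[OF this filter_nz(4)[OF ys(2)]] obtain ps' where
      ps': "length ps' \<le> 2" "inv3 xl xu ps'" "sumd ps' = sumd ?ys" "Jf xl ps' = Jf xl ?ys"
       "Phi xl xu g (stp y0 ?ys) \<le> Phi xl xu g (stp y0 ps')" by blast
    have "stp y0 ?ys = stp y0 ys" by (rule ext, rule filter_nz(1))
    with ps' show ?thesis by (intro exI[of _ ps']) (auto simp: filter_nz)
  qed
  show ?case
  proof (cases "length ps \<le> 2")
    case True thus ?thesis using inv by blast
  next
    case long: False
    show ?thesis
    proof (cases "\<exists>p\<in>set ps. fst p = 0")
      case True then show ?thesis using filt[OF refl inv] by blast
    next
      case nz: False
      obtain a b c rest where "ps = a#b#c#rest" using long
        by (cases ps; cases "tl ps"; cases "tl (tl ps)") auto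
      moreover obtain da qa where "a = (da,qa)" by force
      moreover obtain db qb where "b = (db,qb)" by force
      moreover obtain dc qc where "c = (dc,qc)" by force
      ultimately have ps: "ps = (da,qa)#(db,qb)#(dc,qc)#rest" by simp
      have pos: "0 < da" "0 < db" "0 < dc" using nz inv unfolding ps by force+
      have q: "xl \<le> qa" "qa \<le> xu" "xl \<le> qb" "qb \<le> xu" "xl \<le> qc" "qc \<le> xu" "inv3 xl xu rest"
        using inv unfolding ps by auto
      show ?thesis
      proof (cases "qa = qb")
        case True
        let ?ys = "(da+db,qa)#(dc,qc)#rest"
        have "length ?ys < length ps" "inv3 xl xu ?ys" using ps pos q by auto
        from IH[OF this] obtain ps' where
          ps': "length ps' \<le> 2" "inv3 xl xu ps'" "sumd ps' = sumd ?ys" "Jf xl ps' = Jf xl ?ys"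
           "Phi xl xu g (stp y0 ?ys) \<le> Phi xl xu g (stp y0 ps')" by blast
        have "stp y0 ?ys = stp y0 ps" unfolding ps True by (rule ext) (simp add: algebra_simps)
        moreover have "sumd ?ys = sumd ps" "Jf xl ?ys = Jf xl ps" unfolding ps True by (simp_all add: algebra_simps)
        ultimately show ?thesis using ps' by (intro exI[of _ ps']) auto
      next
        case False
        define ea where "ea = qb - qc"
        define eb where "eb = qc - qa"
        define ec where "ec = qa - qb"
        define pst where "pst t = (da + t*ea, qa)#(db + t*eb, qb)#(dc + t*ec, qc)#rest" for t
        define w where "w x = (if x \<le> qa then ea else 0) + (if x \<le> qb then eb else 0) + (if x \<le> qc then ec else 0)" for x
        have stp_pst: "stp y0 (pst t) x = stp y0 ps x + t * w x" for t x
          unfolding pst_def ps w_def by (simp only: stp_Cons) (simp add: distrib_left split: if_split)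
        have e0: "ea + eb + ec = 0" "ec \<noteq> 0" using False by (auto simp: ea_def eb_def ec_def)
        have sum_pst: "sumd (pst t) = sumd ps" for t
        proof -
          have "t*ea + t*eb + t*ec = 0" using e0 by (metis distrib_left mult_zero_right)
          then show ?thesis unfolding pst_def ps by simp
        qed
        have J_pst: "Jf xl (pst t) = Jf xl ps" for t unfolding pst_def ps ea_def eb_def ec_def
          by simp algebra
        have key: "\<exists>ps'. length ps' \<le> 2 \<and> inv3 xl xu ps' \<and> sumd ps' = sumd ps \<and>
          Jf xl ps' = Jf xl ps \<and> Phi xl xu g (stp y0 (pst t)) \<le> Phi xl xu g (stp y0 ps')"
          if t: "min (da + t*ea) (min (db + t*eb) (dc + t*ec)) = 0" for t
        proof -
          have "length (pst t) = length ps" unfolding pst_def ps by simp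
          moreover have "inv3 xl xu (pst t)" unfolding pst_def using t q by auto
          moreover have "\<exists>p\<in>set (pst t). fst p = 0" unfolding pst_def using t
            by (auto simp: min_def split: if_splits)
          ultimately show ?thesis using filt[of "pst t"] by (simp add: sum_pst J_pst)
        qed
        obtain t2 where t2: "t2 > 0" "min (da + t2*ea) (min (db + t2*eb) (dc + t2*ec)) = 0"
          using exists_zero_pos[OF pos e0] by blast
        obtain t1' where t1': "t1' > 0" "min (da + t1'*(-ea)) (min (db + t1'*(-eb)) (dc + t1'*(-ec))) = 0"
          using exists_zero_pos[OF pos, of "-ea" "-eb" "-ec"] e0 by auto
        define t1 where "t1 = - t1'"
        have t1: "t1 < 0" "min (da + t1*ea) (min (db + t1*eb) (dc + t1*ec)) = 0"
          using t1' by (auto simp: t1_def)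
        obtain ps1 where ps1: "length ps1 \<le> 2" "inv3 xl xu ps1" "sumd ps1 = sumd ps"
          "Jf xl ps1 = Jf xl ps" "Phi xl xu g (stp y0 (pst t1)) \<le> Phi xl xu g (stp y0 ps1)"
          using key[OF t1(2)] by blast
        obtain ps2 where ps2: "length ps2 \<le> 2" "inv3 xl xu ps2" "sumd ps2 = sumd ps"
          "Jf xl ps2 = Jf xl ps" "Phi xl xu g (stp y0 (pst t2)) \<le> Phi xl xu g (stp y0 ps2)"
          using key[OF t2(2)] by blast
        define l where "l = t2 / (t2 - t1)"
        have l: "0 \<le> l" "l \<le> 1" using t1 t2 by (auto simp: l_def field_simps)
        have "Phi xl xu g (stp y0 ps) \<le> max (Phi xl xu g (stp y0 (pst t1))) (Phi xl xu g (stp y0 (pst t2)))"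
        proof (rule Phi_convex[OF g gfin stp_meas stp_meas l], intro ballI)
          fix x
          have "l * t1 + (1 - l) * t2 = 0" using t1 t2 by (simp add: l_def field_simps)
          then have "l * (stp y0 ps x + t1 * w x) + (1 - l) * (stp y0 ps x + t2 * w x) = stp y0 ps x"
          proof -
            have "l * (stp y0 ps x + t1 * w x) + (1 - l) * (stp y0 ps x + t2 * w x) = stp y0 ps x + (l * t1 + (1 - l) * t2) * w x" by algebra
            then show ?thesis using \<open>l * t1 + (1 - l) * t2 = 0\<close> by simp
          qed
          then show "stp y0 ps x = l * stp y0 (pst t1) x + (1 - l) * stp y0 (pst t2) x"
            by (simp add: stp_pst)
        qed
        also have "\<dots> \<le> max (Phi xl xu g (stp y0 ps1)) (Phi xl xu g (stp y0 ps2))"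
          using ps1(5) ps2(5) by (rule max.mono)
        finally have fin: "Phi xl xu g (stp y0 ps) \<le> max (Phi xl xu g (stp y0 ps1)) (Phi xl xu g (stp y0 ps2))" .
        show ?thesis
        proof (cases "Phi xl xu g (stp y0 ps2) \<le> Phi xl xu g (stp y0 ps1)")
          case True
          then have "Phi xl xu g (stp y0 ps) \<le> Phi xl xu g (stp y0 ps1)" using fin by (simp add: max_def)
          then show ?thesis using ps1 by blast
        next
          case False
          then have "Phi xl xu g (stp y0 ps) \<le> Phi xl xu g (stp y0 ps2)" using fin by (simp add: max_def not_le less_imp_le)
          then show ?thesis using ps2 by blast
        qed
      qed
    qed
  qed
qed


definition qf :: "real \<Rightarrow> real \<Rightarrow> (real \<Rightarrow> real) \<Rightarrow> real \<Rightarrow> real" where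
  "qf xl xu h c = (if \<exists>x\<in>{xl<..xu}. c \<le> h x then Sup {x\<in>{xl<..xu}. c \<le> h x} else xl)"

lemma qf_props:
  assumes xl: "xl < xu"
    and mono: "\<forall>x y. xl < x \<and> x \<le> y \<and> y \<le> xu \<longrightarrow> h y \<le> h x"
    and lc: "\<forall>x\<in>{xl<..xu}. continuous (at_left x) h"
  shows "xl \<le> qf xl xu h c" "qf xl xu h c \<le> xu"
    "\<And>x. x \<in> {xl<..xu} \<Longrightarrow> x \<le> qf xl xu h c \<longleftrightarrow> c \<le> h x"
proof -
  let ?A = "{x\<in>{xl<..xu}. c \<le> h x}"
  have bdd: "bdd_above ?A" by (rule bdd_aboveI[of _ xu]) auto
  show "xl \<le> qf xl xu h c"
  proof (cases "?A = {}")
    case False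
    then obtain y where y: "y \<in> ?A" by blast
    then have "y \<le> Sup ?A" by (intro cSup_upper bdd)
    with y False show ?thesis by (auto simp: qf_def)
  qed (auto simp: qf_def)
  show "qf xl xu h c \<le> xu"
  proof (cases "?A = {}")
    case False
    then have "Sup ?A \<le> xu" by (intro cSup_least) auto
    with False show ?thesis by (auto simp: qf_def)
  qed (use xl in \<open>auto simp: qf_def\<close>)
  fix x assume x: "x \<in> {xl<..xu}"
  show "x \<le> qf xl xu h c \<longleftrightarrow> c \<le> h x"
  proof (cases "?A = {}")
    case True
    then show ?thesis using x by (auto simp: qf_def)
  next
    case False
    then have q: "qf xl xu h c = Sup ?A" by (auto simp: qf_def)
    have lt: "c \<le> h z" if z: "z \<in> {xl<..xu}" "z < Sup ?A" for z
    proof -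
      obtain y where y: "y \<in> ?A" "z < y" using less_cSup_iff[OF False bdd] z(2) by blast
      then have "h y \<le> h z" using mono z by auto
      then show ?thesis using y by auto
    qed
    show ?thesis
    proof
      assume "c \<le> h x"
      then show "x \<le> qf xl xu h c" unfolding q using x by (intro cSup_upper bdd) auto
    next
      assume le: "x \<le> qf xl xu h c"
      show "c \<le> h x"
      proof (cases "x < Sup ?A")
        case True then show ?thesis using lt x by blast
      next
        case False
        with le q have xs: "x = Sup ?A" by simp
        have "(h \<longlongrightarrow> h x) (at_left x)" using lc x by (simp add: continuous_within)
        moreover have "eventually (\<lambda>z. c \<le> h z) (at_left x)"
        proof -
          have "eventually (\<lambda>z. z \<in> {xl<..<x}) (at_left x)" using x by (intro eventually_at_left_real) auto
          then show ?thesis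
            by (rule eventually_mono) (use x xs lt in auto)
        qed
        ultimately show ?thesis by (rule tendsto_lowerbound) simp
      qed
    qed
  qed
qed

lemma count_lemma:
  fixes D s :: real and m :: nat
  assumes "0 \<le> D" "0 \<le> s"
  shows "(\<Sum>j=1..m. if real j * D \<le> s then D else 0) \<le> s \<and>
    min s (real m * D) - D \<le> (\<Sum>j=1..m. if real j * D \<le> s then D else 0) \<and>
    (real m * D \<le> s \<longrightarrow> (\<Sum>j=1..m. if real j * D \<le> s then D else 0) = real m * D)"
proof (induction m)
  case 0 then show ?case using assms by simp
next
  case (Suc m)
  let ?S = "\<Sum>j=1..m. if real j * D \<le> s then D else 0"
  have eq: "(\<Sum>j=1..Suc m. if real j * D \<le> s then D else 0) = ?S + (if real (Suc m) * D \<le> s then D else 0)"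
    by simp
  have m: "real m * D \<le> real (Suc m) * D" using assms by (simp add: mult_right_mono)
  show ?case unfolding eq using Suc assms m by (auto simp: algebra_simps min_def)
qed


lemma stp_append1:
  "stp y0 (map (\<lambda>j. (D, q j)) [1..<m+1] @ [(dd, qq)]) x =
     y0 + (\<Sum>j=1..m. if x \<le> q j then D else 0) + (if x \<le> qq then dd else 0)"
proof -
  have "sum_list (map (\<lambda>(d,q). if x \<le> q then d else 0) (map (\<lambda>j. (D, q j)) [1..<m+1]))
      = (\<Sum>j\<in>{1..<m+1}. if x \<le> q j then D else 0)"
    by (simp add: sum_set_upt_conv_sum_list_nat[symmetric] o_def)
  also have "{1..<m+1} = {1..m}" by auto
  finally show ?thesis by (simp add: stp_def)
qed

lemma sumd_append1: "sumd (map (\<lambda>j. (D, q j)) [1..<m+1] @ [(dd, qq)]) = real m * D + dd"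
  by (simp add: sumd_def o_def sum_list_triv)

lemma Jf_append1: "Jf xl (map (\<lambda>j. (D, q j)) [1..<m+1] @ [(dd, qq)]) =
   Jf xl (map (\<lambda>j. (D, q j)) [1..<m+1]) + dd * (qq - xl)"
  by (simp add: Jf_def)

lemma inv3_append1:
  assumes "0 \<le> D" "0 \<le> dd" "xl \<le> qq" "qq \<le> xu" "\<And>j. xl \<le> q j" "\<And>j. q j \<le> xu"
  shows "inv3 xl xu (map (\<lambda>j. (D, q j)) [1..<m+1] @ [(dd, qq)])"
  using assms by (auto simp: inv3_def)

lemma approx:
  fixes m :: nat
  assumes xl: "xl < xu" and b: "bl \<le> bu" and f: "feasible7 xl xu bl bu C h"
  shows "\<exists>y0 ps. inv3 xl xu ps \<and> bl \<le> y0 \<and> y0 + sumd ps = bu \<and> y0 * (xu - xl) + Jf xl ps = C \<and>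
           (\<forall>x\<in>{xl<..xu}. h x \<le> stp y0 ps x + (bu - bl) / real (m + 1))"
proof -
  have hint: "(h has_integral C) {xl<..xu}" and hb: "\<forall>x\<in>{xl<..xu}. bl \<le> h x \<and> h x \<le> bu"
    and mono: "\<forall>x y. xl < x \<and> x \<le> y \<and> y \<le> xu \<longrightarrow> h y \<le> h x"
    and lc: "\<forall>x\<in>{xl<..xu}. continuous (at_left x) h"
    using f by (auto simp: feasible7_def)
  define D where "D = (bu - bl) / real (m + 1)"
  have D0: "0 \<le> D" using b by (simp add: D_def)
  have nD: "real (m + 1) * D = bu - bl" by (simp add: D_def)
  define q where "q j = qf xl xu h (bl + real j * D)" for j :: nat
  note qp = qf_props[OF xl mono lc]
  have q1: "xl \<le> q j" "q j \<le> xu" for j using qp unfolding q_def by auto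
  have q2: "x \<le> q j \<longleftrightarrow> real j * D \<le> h x - bl" if "x \<in> {xl<..xu}" for x j
    using qp(3)[OF that, of "bl + real j * D"] unfolding q_def by linarith
  define base where "base = map (\<lambda>j. (D, q j)) [1..<m+1]"
  define psd where "psd dd = base @ [(D - dd, q (m+1))]" for dd
  define S where "S s = (\<Sum>j=1..m. if real j * D \<le> s then D else 0)" for s
  have stp_eq: "stp (bl + dd) (psd dd) x = bl + dd + S (h x - bl) + (if real (m+1) * D \<le> h x - bl then D - dd else 0)"
    if x: "x \<in> {xl<..xu}" for x dd
    unfolding psd_def base_def stp_append1 S_def using q2[OF x] by simp
  have cnt: "S s \<le> s" "min s (real m * D) - D \<le> S s" "real m * D \<le> s \<Longrightarrow> S s = real m * D"
    if "0 \<le> s" for s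
    using count_lemma[OF D0 that, of m] unfolding S_def by auto
  have sx: "0 \<le> h x - bl" "h x - bl \<le> real (m+1) * D" if "x \<in> {xl<..xu}" for x
    using hb that nD by auto
  have p0: "stp (bl + 0) (psd 0) x \<le> h x" if x: "x \<in> {xl<..xu}" for x
  proof -
    have "S (h x - bl) + (if real (m+1) * D \<le> h x - bl then D else 0) \<le> h x - bl"
    proof (cases "real (m+1) * D \<le> h x - bl")
      case True
      then have "h x - bl = real (m+1) * D" using sx[OF x] by simp
      moreover have "real m * D \<le> h x - bl" using True D0 by (simp add: algebra_simps)
      ultimately show ?thesis using cnt(3)[OF sx(1)[OF x]] True by (simp add: algebra_simps)
    qed (use cnt(1)[OF sx(1)[OF x]] in simp)
    then show ?thesis using stp_eq[OF x, of 0] by (auto split: if_splits)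
  qed
  have pD: "h x \<le> stp (bl + D) (psd D) x" if x: "x \<in> {xl<..xu}" for x
  proof -
    have "h x - bl \<le> D + S (h x - bl)"
    proof (cases "real m * D \<le> h x - bl")
      case True
      then show ?thesis using cnt(3)[OF sx(1)[OF x]] sx(2)[OF x] by (simp add: algebra_simps)
    next
      case False
      then show ?thesis using cnt(2)[OF sx(1)[OF x]] by (simp add: min_def)
    qed
    then show ?thesis using stp_eq[OF x, of D] by simp
  qed
  have pb: "h x \<le> stp (bl + dd) (psd dd) x + D" if x: "x \<in> {xl<..xu}" and dd: "0 \<le> dd" "dd \<le> D" for x dd
  proof -
    have "h x - bl \<le> D + S (h x - bl)"
    proof (cases "real m * D \<le> h x - bl")
      case True
      then show ?thesis using cnt(3)[OF sx(1)[OF x]] sx(2)[OF x] by (simp add: algebra_simps)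
    next
      case False
      then show ?thesis using cnt(2)[OF sx(1)[OF x]] by (simp add: min_def)
    qed
    then show ?thesis using stp_eq[OF x, of dd] dd by auto
  qed
  have inv: "inv3 xl xu (psd dd)" if "0 \<le> dd" "dd \<le> D" for dd
    unfolding psd_def base_def using that D0 q1 by (intro inv3_append1) auto
  define I where "I dd = (bl + dd) * (xu - xl) + Jf xl (psd dd)" for dd
  have Ieq: "I dd = I 0 + dd * (xu - q (m+1))" for dd
    unfolding I_def psd_def base_def Jf_append1 by (simp add: algebra_simps)
  have I0: "I 0 \<le> C"
    using has_integral_le[OF stp_int[OF _ inv[of 0]] hint] p0 xl D0 unfolding I_def by auto
  have ID: "C \<le> I D"
    using has_integral_le[OF hint stp_int[OF _ inv[of D]]] pD xl D0 unfolding I_def by auto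
  have k0: "0 \<le> xu - q (m+1)" using q1 by simp
  obtain dd where dd: "0 \<le> dd" "dd \<le> D" "I dd = C"
  proof (cases "xu - q (m+1) = 0")
    case True
    then show ?thesis using I0 ID Ieq[of D] D0 by (intro that[of 0]) auto
  next
    case False
    then have kp: "0 < xu - q (m+1)" using k0 by simp
    define dd where "dd = (C - I 0) / (xu - q (m+1))"
    have "0 \<le> dd" using I0 kp by (simp add: dd_def)
    moreover have "dd \<le> D" using ID Ieq[of D] kp by (simp add: dd_def field_simps)
    moreover have "I dd = C" using Ieq[of dd] kp by (simp add: dd_def)
    ultimately show ?thesis by (rule that)
  qed
  show ?thesis
  proof (intro exI conjI)
    show "inv3 xl xu (psd dd)" using inv dd by auto
    show "bl \<le> bl + dd" using dd by simp
    show "bl + dd + sumd (psd dd) = bu" unfolding psd_def base_def sumd_append1 using nD by (simp add: algebra_simps)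
    show "(bl + dd) * (xu - xl) + Jf xl (psd dd) = C" using dd I_def by simp
    show "\<forall>x\<in>{xl<..xu}. h x \<le> stp (bl + dd) (psd dd) x + (bu - bl) / real (m + 1)"
      using pb dd unfolding D_def by auto
  qed
qed


lemma term_bound:
  fixes d d' B x q q' :: real
  assumes "0 \<le> d" "d \<le> B" "0 \<le> d'"
  shows "(if x \<le> q then d else 0) \<le> (if x \<le> q' then d' else 0) + \<bar>d - d'\<bar> +
     B * ((if x \<le> max q q' then 1 else 0) - (if x \<le> min q q' then 1 else 0))"
  using assms by (auto simp: max_def min_def)

lemma has_integral_ind_diff:
  fixes a b B xl xu :: real
  assumes "xl \<le> a" "a \<le> xu" "xl \<le> b" "b \<le> xu"
  shows "((\<lambda>x. B * ((if x \<le> a then 1 else 0) - (if x \<le> b then 1 else 0))) has_integral B * (a - b)) {xl<..xu}"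
proof -
  have "((\<lambda>x. B * ((if x \<le> a then 1 else 0) - (if x \<le> b then 1 else 0))) has_integral B * (1 * (a - xl) - 1 * (b - xl))) {xl<..xu}"
    using assms by (intro has_integral_mult_right has_integral_diff has_integral_ind_Ioc)
  then show ?thesis by (simp add: algebra_simps)
qed

lemma step2_lip:
  fixes y0 d1 d2 q1 q2 y0' d1' d2' q1' q2' B :: real
  assumes g: "g \<in> borel_measurable (restrict_space lebesgue {xl<..xu::real})"
    and gfin: "\<forall>x\<in>{xl<..xu}. g x \<noteq> -\<infinity>"
    and d: "0 \<le> d1" "d1 \<le> B" "0 \<le> d2" "d2 \<le> B" "0 \<le> d1'" "0 \<le> d2'"
    and q: "xl \<le> q1" "q1 \<le> xu" "xl \<le> q2" "q2 \<le> xu" "xl \<le> q1'" "q1' \<le> xu" "xl \<le> q2'" "q2' \<le> xu"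
  shows "Phi xl xu g (stp y0 [(d1,q1),(d2,q2)]) \<le> Phi xl xu g (stp y0' [(d1',q1'),(d2',q2')]) +
     ennreal ((\<bar>y0 - y0'\<bar> + \<bar>d1 - d1'\<bar> + \<bar>d2 - d2'\<bar>) * (xu - xl) + B * \<bar>q1 - q1'\<bar> + B * \<bar>q2 - q2'\<bar>)"
proof -
  define c0 where "c0 = \<bar>y0 - y0'\<bar> + \<bar>d1 - d1'\<bar> + \<bar>d2 - d2'\<bar>"
  define e where "e x = c0 + B * ((if x \<le> max q1 q1' then 1 else 0) - (if x \<le> min q1 q1' then 1 else 0))
     + B * ((if x \<le> max q2 q2' then 1 else 0) - (if x \<le> min q2 q2' then 1 else 0))" for x
  have B: "0 \<le> B" using d by simp
  have em: "e \<in> borel_measurable borel" unfolding e_def by measurable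
  have mm: "xl \<le> max q1 q1'" "max q1 q1' \<le> xu" "xl \<le> min q1 q1'" "min q1 q1' \<le> xu"
    "xl \<le> max q2 q2'" "max q2 q2' \<le> xu" "xl \<le> min q2 q2'" "min q2 q2' \<le> xu" using q by auto
  have eint: "(e has_integral (c0 * (xu - xl) + B * (max q1 q1' - min q1 q1')
      + B * (max q2 q2' - min q2 q2'))) {xl<..xu}"
    unfolding e_def using q
    by (intro has_integral_add has_integral_const_Ioc has_integral_ind_diff mm) auto
  have eq: "c0 * (xu - xl) + B * (max q1 q1' - min q1 q1')
      + B * (max q2 q2' - min q2 q2') =
      (\<bar>y0 - y0'\<bar> + \<bar>d1 - d1'\<bar> + \<bar>d2 - d2'\<bar>) * (xu - xl) + B * \<bar>q1 - q1'\<bar> + B * \<bar>q2 - q2'\<bar>"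
    by (simp add: c0_def max_def min_def)
  have enn: "\<forall>x\<in>{xl<..xu}. 0 \<le> e x" unfolding e_def c0_def using B
    by (auto simp: max_def min_def)
  have le: "\<forall>x\<in>{xl<..xu}. stp y0 [(d1,q1),(d2,q2)] x \<le> stp y0' [(d1',q1'),(d2',q2')] x + e x"
  proof
    fix x
    have "y0 \<le> y0' + \<bar>y0 - y0'\<bar>" by simp
    moreover note term_bound[OF d(1,2,5), of x q1 q1'] term_bound[OF d(3,4,6), of x q2 q2']
    ultimately show "stp y0 [(d1,q1),(d2,q2)] x \<le> stp y0' [(d1',q1'),(d2',q2')] x + e x"
      unfolding e_def c0_def by simp
  qed
  show ?thesis using Phi_lip[OF g gfin stp_meas em eint enn le] unfolding eq .
qed

definition kk :: "real \<times> real \<times> real \<times> real \<times> real \<Rightarrow> real \<Rightarrow> real" where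
  "kk p = stp (fst p) [(fst (snd p), fst (snd (snd (snd p)))), (fst (snd (snd p)), snd (snd (snd (snd p))))]"

lemma kk_simp[simp]: "kk (y0,d1,d2,q1,q2) = stp y0 [(d1,q1),(d2,q2)]"
  by (simp add: kk_def)

definition PP :: "real \<Rightarrow> real \<Rightarrow> real \<Rightarrow> real \<Rightarrow> real \<Rightarrow> (real \<times> real \<times> real \<times> real \<times> real) set" where
  "PP xl xu bl bu C = {p. bl \<le> fst p \<and> 0 \<le> fst (snd p) \<and> 0 \<le> fst (snd (snd p)) \<and>
     fst p + fst (snd p) + fst (snd (snd p)) \<le> bu \<and>
     xl \<le> fst (snd (snd (snd p))) \<and> fst (snd (snd (snd p))) \<le> xu \<and>
     xl \<le> snd (snd (snd (snd p))) \<and> snd (snd (snd (snd p))) \<le> xu \<and>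
     fst p * (xu - xl) + fst (snd p) * (fst (snd (snd (snd p))) - xl) + fst (snd (snd p)) * (snd (snd (snd (snd p))) - xl) = C}"

lemma PP_iff[simp]: "(y0,d1,d2,q1,q2) \<in> PP xl xu bl bu C \<longleftrightarrow>
   bl \<le> y0 \<and> 0 \<le> d1 \<and> 0 \<le> d2 \<and> y0 + d1 + d2 \<le> bu \<and> xl \<le> q1 \<and> q1 \<le> xu \<and> xl \<le> q2 \<and> q2 \<le> xu \<and>
   y0 * (xu - xl) + d1 * (q1 - xl) + d2 * (q2 - xl) = C"
  by (simp add: PP_def)

lemma PP_compact: "compact (PP xl xu bl bu C)"
proof -
  have cl: "closed (PP xl xu bl bu C)" unfolding PP_def
    by (intro closed_Collect_conj closed_Collect_le closed_Collect_eq continuous_intros)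
  have "PP xl xu bl bu C = ({bl..bu} \<times> {0..bu-bl} \<times> {0..bu-bl} \<times> {xl..xu} \<times> {xl..xu}) \<inter> PP xl xu bl bu C"
    by (auto simp: PP_def)
  also have "compact \<dots>" using cl by (intro compact_Int_closed compact_Times compact_Icc)
  finally show ?thesis .
qed

lemma max_exists:
  assumes g: "g \<in> borel_measurable (restrict_space lebesgue {xl<..xu::real})"
    and gfin: "\<forall>x\<in>{xl<..xu}. g x \<noteq> -\<infinity>"
    and xl: "xl < xu" and b: "bl \<le> bu" and C: "bl * (xu - xl) \<le> C" "C \<le> bu * (xu - xl)"
  shows "\<exists>ps\<in>PP xl xu bl bu C. \<forall>p\<in>PP xl xu bl bu C. Phi xl xu g (kk p) \<le> Phi xl xu g (kk ps)"
proof -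
  let ?P = "PP xl xu bl bu C"
  define B where "B = bu - bl"
  define p0 where "p0 = (C / (xu - xl), 0::real, 0::real, xl, xl)"
  have p0: "p0 \<in> ?P" using xl C by (simp add: p0_def field_simps)
  have lipP: "Phi xl xu g (kk p) \<le> Phi xl xu g (kk p') +
     ennreal ((\<bar>fst p - fst p'\<bar> + \<bar>fst (snd p) - fst (snd p')\<bar> + \<bar>fst (snd (snd p)) - fst (snd (snd p'))\<bar>) * (xu - xl)
       + B * \<bar>fst (snd (snd (snd p))) - fst (snd (snd (snd p')))\<bar> + B * \<bar>snd (snd (snd (snd p))) - snd (snd (snd (snd p')))\<bar>)"
    if "p \<in> ?P" "p' \<in> ?P" for p p'
  proof -
    obtain y0 d1 d2 q1 q2 where p: "p = (y0,d1,d2,q1,q2)" by (cases p) auto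
    obtain y0' d1' d2' q1' q2' where p': "p' = (y0',d1',d2',q1',q2')" by (cases p') auto
    show ?thesis using that unfolding p p' B_def
      by (simp only: kk_simp fst_conv snd_conv) (rule step2_lip[OF g gfin]; auto)
  qed
  show ?thesis
  proof (cases "Phi xl xu g (kk p0) = top")
    case True
    then show ?thesis using p0 by (intro bexI[of _ p0]) auto
  next
    case False
    define K where "K = 3 * (xu - xl) + 2 * B"
    have fin: "Phi xl xu g (kk p) < top" if pP: "p \<in> ?P" for p
    proof -
      obtain r where r: "Phi xl xu g (kk p) \<le> Phi xl xu g (kk p0) + ennreal r" using lipP[OF pP p0] by blast
      also have "\<dots> < top" using False by (simp add: less_top[symmetric])
      finally show ?thesis .
    qed
    define f where "f p = enn2real (Phi xl xu g (kk p))" for p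
    have fe: "Phi xl xu g (kk p) = ennreal (f p)" if "p \<in> ?P" for p
      using fin[OF that] by (simp add: f_def)
    have dist_le: "dist (f p) (f p') \<le> K * dist p p'" if pp: "p \<in> ?P" "p' \<in> ?P" for p p'
    proof -
      have one: "f p \<le> f p' + K * dist p p'" if pp: "p \<in> ?P" "p' \<in> ?P" for p p'
      proof -
        let ?Bd = "(\<bar>fst p - fst p'\<bar> + \<bar>fst (snd p) - fst (snd p')\<bar> + \<bar>fst (snd (snd p)) - fst (snd (snd p'))\<bar>) * (xu - xl)
           + B * \<bar>fst (snd (snd (snd p))) - fst (snd (snd (snd p')))\<bar> + B * \<bar>snd (snd (snd (snd p))) - snd (snd (snd (snd p')))\<bar>"
        have B0: "0 \<le> B" using b by (simp add: B_def)
        have h1: "\<bar>fst p - fst p'\<bar> \<le> dist p p'" using dist_fst_le[of p p'] by (simp add: dist_real_def)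
        have h2: "\<bar>fst (snd p) - fst (snd p')\<bar> \<le> dist p p'"
          using dist_fst_le[of "snd p" "snd p'"] dist_snd_le[of p p'] by (simp add: dist_real_def)
        have h3: "\<bar>fst (snd (snd p)) - fst (snd (snd p'))\<bar> \<le> dist p p'"
          using dist_fst_le[of "snd (snd p)" "snd (snd p')"] dist_snd_le[of "snd p" "snd p'"] dist_snd_le[of p p']
          by (simp add: dist_real_def)
        have h4: "\<bar>fst (snd (snd (snd p))) - fst (snd (snd (snd p')))\<bar> \<le> dist p p'"
          using dist_fst_le[of "snd (snd (snd p))" "snd (snd (snd p'))"] dist_snd_le[of "snd (snd p)" "snd (snd p')"]
            dist_snd_le[of "snd p" "snd p'"] dist_snd_le[of p p']
          by (simp add: dist_real_def)
        have h5: "\<bar>snd (snd (snd (snd p))) - snd (snd (snd (snd p')))\<bar> \<le> dist p p'"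
          using dist_snd_le[of "snd (snd (snd p))" "snd (snd (snd p'))"] dist_snd_le[of "snd (snd p)" "snd (snd p')"]
            dist_snd_le[of "snd p" "snd p'"] dist_snd_le[of p p']
          by (simp add: dist_real_def)
        have "?Bd \<le> (dist p p' + dist p p' + dist p p') * (xu - xl) + B * dist p p' + B * dist p p'"
          using h1 h2 h3 h4 h5 xl B0 by (intro add_mono mult_right_mono mult_left_mono) auto
        also have "\<dots> = K * dist p p'" by (simp add: K_def algebra_simps)
        finally have Bd: "?Bd \<le> K * dist p p'" .
        have Bd0: "0 \<le> ?Bd" using xl B0 by auto
        have "ennreal (f p) \<le> ennreal (f p') + ennreal ?Bd" using lipP[OF pp] fe[OF pp(1)] fe[OF pp(2)] by simp
        also have "\<dots> = ennreal (f p' + ?Bd)" using Bd0 by (simp add: f_def ennreal_plus)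
        finally have "f p \<le> f p' + ?Bd" using Bd0 by (subst (asm) ennreal_le_iff) (auto simp: f_def)
        then show ?thesis using Bd by simp
      qed
      have "f p \<le> f p' + K * dist p p'" "f p' \<le> f p + K * dist p p'"
        using one[OF pp] one[OF pp(2,1)] by (auto simp: dist_commute)
      then show ?thesis by (simp add: dist_real_def abs_le_iff)
    qed
    have K0: "0 \<le> K" using xl b by (simp add: K_def B_def)
    have "continuous_on ?P f"
      by (rule lipschitz_on_continuous_on[of K]) (use dist_le K0 in \<open>auto simp: lipschitz_on_def\<close>)
    then obtain ps where ps: "ps \<in> ?P" "\<forall>p\<in>?P. f p \<le> f ps"
      using continuous_attains_sup[OF PP_compact, of xl xu bl bu C f] p0 by blast
    show ?thesis
    proof (intro bexI[OF _ ps(1)] ballI)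
      fix p assume p: "p \<in> ?P"
      show "Phi xl xu g (kk p) \<le> Phi xl xu g (kk ps)"
      proof -
        have "ennreal (f p) \<le> ennreal (f ps)" using ps(2) p by (intro ennreal_leI) auto
        then show ?thesis using fe[OF p] fe[OF ps(1)] by simp
      qed
    qed
  qed
qed


lemma pad2:
  assumes "length ps \<le> 2" "inv3 xl xu ps" "xl \<le> xu"
  shows "\<exists>d1 q1 d2 q2. stp y0 ps = stp y0 [(d1,q1),(d2,q2)] \<and> 0 \<le> d1 \<and> 0 \<le> d2 \<and>
     xl \<le> q1 \<and> q1 \<le> xu \<and> xl \<le> q2 \<and> q2 \<le> xu \<and> d1 + d2 = sumd ps \<and>
     d1 * (q1 - xl) + d2 * (q2 - xl) = Jf xl ps"
proof (cases ps)
  case Nil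
  then show ?thesis using assms by (intro exI[of _ 0] exI[of _ xl]) (auto simp: fun_eq_iff)
next
  case (Cons a ps1)
  obtain d1 q1 where a: "a = (d1,q1)" by force
  show ?thesis
  proof (cases ps1)
    case Nil
    then show ?thesis using assms Cons a
      by (intro exI[of _ d1] exI[of _ q1] exI[of _ 0] exI[of _ xl]) (auto simp: fun_eq_iff)
  next
    case (Cons b ps2)
    obtain d2 q2 where b: "b = (d2,q2)" by force
    have "ps2 = []" using assms(1) \<open>ps = a # ps1\<close> Cons by simp
    then show ?thesis using assms \<open>ps = a # ps1\<close> Cons a b
      by (intro exI[of _ d1] exI[of _ q1] exI[of _ d2] exI[of _ q2]) (auto simp: fun_eq_iff)
  qed
qed

lemma objective_Phi: "objective7 xl xu g h = Phi xl xu g h"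
  by (simp add: objective7_def Phi_def Psi_def)

theorem mainTheorem7:
  fixes xl xu bl bu C :: real and g :: "real \<Rightarrow> ereal"
  assumes "xl < xu" and "bl \<le> bu"
    and "bl * (xu - xl) \<le> C" and "C \<le> bu * (xu - xl)"
    and "\<forall>x\<in>{xl<..xu}. g x \<noteq> -\<infinity>"
    and "g \<in> borel_measurable (restrict_space lebesgue {xl<..xu})"
  shows "\<exists>hs. feasible7 xl xu bl bu C hs \<and>
           (\<forall>h. feasible7 xl xu bl bu C h \<longrightarrow> objective7 xl xu g h \<le> objective7 xl xu g hs) \<and>
           (\<exists>y1 y2 y3 x1 x2. bl \<le> y3 \<and> y3 \<le> y2 \<and> y2 \<le> y1 \<and> y1 \<le> bu \<and>
              xl \<le> x1 \<and> x1 \<le> x2 \<and> x2 \<le> xu \<and>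
              (\<forall>x\<in>{xl<..xu}. hs x = (if x \<le> x1 then y1 else if x \<le> x2 then y2 else y3)))"
proof -
  note xl = assms(1) and b = assms(2) and C = assms(3,4) and gfin = assms(5) and g = assms(6)
  obtain ps where ps: "ps \<in> PP xl xu bl bu C" "\<forall>p\<in>PP xl xu bl bu C. Phi xl xu g (kk p) \<le> Phi xl xu g (kk ps)"
    using max_exists[OF g gfin xl b C] by blast
  obtain y0 d1 d2 q1 q2 where pe: "ps = (y0,d1,d2,q1,q2)" by (cases ps) auto
  have P: "bl \<le> y0" "0 \<le> d1" "0 \<le> d2" "y0 + d1 + d2 \<le> bu" "xl \<le> q1" "q1 \<le> xu" "xl \<le> q2" "q2 \<le> xu"
    "y0 * (xu - xl) + d1 * (q1 - xl) + d2 * (q2 - xl) = C" using ps(1) unfolding pe by auto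
  define hs where "hs = kk ps"
  have hs: "hs = stp y0 [(d1,q1),(d2,q2)]" unfolding hs_def pe by simp
  have inv: "inv3 xl xu [(d1,q1),(d2,q2)]" using P by simp
  have feas: "feasible7 xl xu bl bu C hs"
    unfolding feasible7_def
  proof (intro conjI ballI allI impI)
    show "(hs has_integral C) {xl<..xu}"
      using stp_int[OF _ inv, of y0] xl P(9) unfolding hs by (simp add: algebra_simps)
    fix x
    show "bl \<le> hs x" using stp_bounds(1)[OF inv, of y0 x] P unfolding hs by simp
    show "hs x \<le> bu" using stp_bounds(2)[OF inv, of y0 x] P unfolding hs by simp
    show "continuous (at_left x) hs" unfolding hs by (rule stp_left_cont)
  next
    fix x y :: real assume "xl < x \<and> x \<le> y \<and> y \<le> xu"
    then show "hs y \<le> hs x" unfolding hs using stp_antimono[OF inv] by blast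
  qed
  have opt: "Phi xl xu g h \<le> Phi xl xu g hs" if hf: "feasible7 xl xu bl bu C h" for h
  proof (rule ennreal_le_epsilon)
    fix e :: real assume e: "0 < e"
    obtain n :: nat where n: "(bu - bl) * (xu - xl) / e < real n" using reals_Archimedean2 by blast
    define m where "m = n"
    have mb: "(bu - bl) / real (m + 1) * (xu - xl) \<le> e"
    proof -
      have "(bu - bl) * (xu - xl) < e * real n" using n e by (simp add: field_simps)
      also have "\<dots> \<le> e * real (m + 1)" using e by (simp add: m_def)
      finally show ?thesis by (simp add: field_simps)
    qed
    obtain y0' ps1 where a: "inv3 xl xu ps1" "bl \<le> y0'" "y0' + sumd ps1 = bu" "y0' * (xu - xl) + Jf xl ps1 = C"
      "\<forall>x\<in>{xl<..xu}. h x \<le> stp y0' ps1 x + (bu - bl) / real (m + 1)"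
      using approx[OF xl b hf, of m] by blast
    obtain ps2 where r: "length ps2 \<le> 2" "inv3 xl xu ps2" "sumd ps2 = sumd ps1" "Jf xl ps2 = Jf xl ps1"
      "Phi xl xu g (stp y0' ps1) \<le> Phi xl xu g (stp y0' ps2)"
      using reduce[OF g gfin a(1), of y0'] by blast
    obtain e1 r1 e2 r2 where pd: "stp y0' ps2 = stp y0' [(e1,r1),(e2,r2)]" "0 \<le> e1" "0 \<le> e2"
      "xl \<le> r1" "r1 \<le> xu" "xl \<le> r2" "r2 \<le> xu" "e1 + e2 = sumd ps2" "e1 * (r1 - xl) + e2 * (r2 - xl) = Jf xl ps2"
      using pad2[OF r(1,2), of y0'] xl by auto
    have inP: "(y0', e1, e2, r1, r2) \<in> PP xl xu bl bu C"
      using a pd r by (simp add: algebra_simps)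
    define D where "D = (bu - bl) / real (m + 1)"
    have D0: "0 \<le> D" using b by (simp add: D_def)
    have "Phi xl xu g h \<le> Phi xl xu g (stp y0' ps1) + ennreal (D * (xu - xl))"
      by (rule Phi_lip[OF g gfin stp_meas _ has_integral_const_Ioc]) (use xl D0 a(5) in \<open>auto simp: D_def\<close>)
    also have "\<dots> \<le> Phi xl xu g (stp y0' ps2) + ennreal e"
      using r(5) mb by (intro add_mono ennreal_leI) (auto simp: D_def)
    also have "Phi xl xu g (stp y0' ps2) = Phi xl xu g (kk (y0', e1, e2, r1, r2))" using pd(1) by simp
    also have "\<dots> \<le> Phi xl xu g hs" using ps(2) inP unfolding hs_def by blast
    finally show "Phi xl xu g h \<le> Phi xl xu g hs + ennreal e" by simp
  qed
  have form: "\<exists>y1 y2 y3 x1 x2. bl \<le> y3 \<and> y3 \<le> y2 \<and> y2 \<le> y1 \<and> y1 \<le> bu \<and>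
              xl \<le> x1 \<and> x1 \<le> x2 \<and> x2 \<le> xu \<and>
              (\<forall>x\<in>{xl<..xu}. hs x = (if x \<le> x1 then y1 else if x \<le> x2 then y2 else y3))"
  proof (cases "q1 \<le> q2")
    case True
    show ?thesis
      by (rule exI[of _ "y0 + d1 + d2"], rule exI[of _ "y0 + d2"], rule exI[of _ y0], rule exI[of _ q1],
          rule exI[of _ q2]) (use True P in \<open>auto simp: hs\<close>)
  next
    case False
    show ?thesis
      by (rule exI[of _ "y0 + d1 + d2"], rule exI[of _ "y0 + d1"], rule exI[of _ y0], rule exI[of _ q2],
          rule exI[of _ q1]) (use False P in \<open>auto simp: hs\<close>)
  qed
  show ?thesis
    using feas opt form by (intro exI[of _ hs]) (auto simp: objective_Phi)
qed

end
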